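(* Let $a_n$ be the number of $n$-multisets of $[n]$ with no consecutive integers. Then \[\sum_{n\geq 1} a_n z^n \;=\; \frac{1-3z-\sqrt{1-2z-3z^2}}{6z-2}.\]
   Context: An $n$-multiset of $[n]=\{1,\dots,n\}$ is identified with the non-decreasing sequence $\pi_1\leq\pi_2\leq\cdots\leq\pi_n$ of its elements (elements may repeat). It has no consecutive integers if $\pi_{i+1}\neq\pi_i+1$ for all $i\in[n-1]$. *)

theory Defs
  imports Complex_Main "HOL-Library.Multiset"
begin

text \<open>An n-multiset of [n] is a multiset of size n with elements in {1..n}; it is
identified with its non-decreasing sequence of elements (sorted_list_of_multiset).\<close>

definition no_consecutive :: "nat multiset \<Rightarrow> bool" where
  "no_consecutive M \<longleftrightarrow>
     (let \<pi> = sorted_list_of_multiset M in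
      \<forall>i. Suc i < length \<pi> \<longrightarrow> \<pi> ! (Suc i) \<noteq> \<pi> ! i + 1)"

definition a_seq :: "nat \<Rightarrow> nat" where
  "a_seq n = card {M :: nat multiset. size M = n \<and> set_mset M \<subseteq> {1..n} \<and> no_consecutive M}"

end

theory Submission
  imports Defs "HOL-Analysis.FPS_Convergence"
begin


lemma nat3_cases: fixes n :: nat shows "(n = 0 \<Longrightarrow> P) \<Longrightarrow> (n = 1 \<Longrightarrow> P) \<Longrightarrow> (\<And>m. n = m + 2 \<Longrightarrow> P) \<Longrightarrow> P"
proof -
  assume a: "n = 0 \<Longrightarrow> P" "n = 1 \<Longrightarrow> P" "\<And>m. n = m + 2 \<Longrightarrow> P"
  show P
  proof (cases "n \<ge> 2")
    case True then show ?thesis using a(3)[of "n-2"] by simp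
  next
    case False then show ?thesis using a(1,2) by (cases n) auto
  qed
qed

definition nc :: "nat multiset \<Rightarrow> bool" where
  "nc M \<longleftrightarrow> (\<forall>x. x \<in># M \<longrightarrow> Suc x \<notin># M)"

lemma sorted_nc_list:
  "sorted xs \<Longrightarrow> (\<forall>i. Suc i < length xs \<longrightarrow> xs ! (Suc i) \<noteq> xs ! i + 1) \<longleftrightarrow> (\<forall>x\<in>set xs. Suc x \<notin> set xs)"
proof (induction xs)
  case Nil then show ?case by simp
next
  case (Cons a ys)
  have sa: "\<forall>y\<in>set ys. a \<le> y" and sys: "sorted ys" using Cons.prems by auto
  have lhs: "(\<forall>i. Suc i < length (a # ys) \<longrightarrow> (a # ys) ! (Suc i) \<noteq> (a # ys) ! i + 1)
      \<longleftrightarrow> (ys \<noteq> [] \<longrightarrow> hd ys \<noteq> a + 1) \<and> (\<forall>i. Suc i < length ys \<longrightarrow> ys ! (Suc i) \<noteq> ys ! i + 1)"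
  proof
    assume H: "\<forall>i. Suc i < length (a # ys) \<longrightarrow> (a # ys) ! (Suc i) \<noteq> (a # ys) ! i + 1"
    show "(ys \<noteq> [] \<longrightarrow> hd ys \<noteq> a + 1) \<and> (\<forall>i. Suc i < length ys \<longrightarrow> ys ! (Suc i) \<noteq> ys ! i + 1)"
    proof
      show "ys \<noteq> [] \<longrightarrow> hd ys \<noteq> a + 1" using H[rule_format, of 0] by (cases ys) auto
      show "\<forall>i. Suc i < length ys \<longrightarrow> ys ! (Suc i) \<noteq> ys ! i + 1"
        using H by (metis Suc_less_eq length_Cons nth_Cons_Suc)
    qed
  next
    assume H: "(ys \<noteq> [] \<longrightarrow> hd ys \<noteq> a + 1) \<and> (\<forall>i. Suc i < length ys \<longrightarrow> ys ! (Suc i) \<noteq> ys ! i + 1)"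
    show "\<forall>i. Suc i < length (a # ys) \<longrightarrow> (a # ys) ! (Suc i) \<noteq> (a # ys) ! i + 1"
    proof (intro allI impI)
      fix i assume i: "Suc i < length (a # ys)"
      show "(a # ys) ! (Suc i) \<noteq> (a # ys) ! i + 1"
      proof (cases i)
        case 0 then show ?thesis using H i by (cases ys) auto
      next
        case (Suc j) then show ?thesis using H i by simp
      qed
    qed
  qed
  show ?case
  proof
    assume L: "\<forall>i. Suc i < length (a # ys) \<longrightarrow> (a # ys) ! (Suc i) \<noteq> (a # ys) ! i + 1"
    then have h1: "ys \<noteq> [] \<longrightarrow> hd ys \<noteq> a + 1" and h2: "\<forall>x\<in>set ys. Suc x \<notin> set ys"
      using lhs Cons.IH[OF sys] by auto
    have "Suc a \<notin> set ys"
    proof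
      assume "Suc a \<in> set ys"
      then obtain b zs where ys: "ys = b # zs" by (cases ys) auto
      have "b \<le> Suc a" using sys \<open>Suc a \<in> set ys\<close> ys by auto
      moreover have "b \<ge> a" using sa ys by auto
      moreover have "b \<noteq> Suc a" using h1 ys by simp
      ultimately have "b = a" by simp
      then show False using h2 ys \<open>Suc a \<in> set ys\<close> by auto
    qed
    moreover have "\<forall>y\<in>set ys. Suc y \<noteq> a" using sa by fastforce
    ultimately show "\<forall>x\<in>set (a # ys). Suc x \<notin> set (a # ys)" using h2 by auto
  next
    assume R: "\<forall>x\<in>set (a # ys). Suc x \<notin> set (a # ys)"
    then have "\<forall>x\<in>set ys. Suc x \<notin> set ys" by auto
    then have "\<forall>i. Suc i < length ys \<longrightarrow> ys ! (Suc i) \<noteq> ys ! i + 1" using Cons.IH[OF sys] by simp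
    moreover have "ys \<noteq> [] \<longrightarrow> hd ys \<noteq> a + 1" using R by (cases ys) auto
    ultimately show "\<forall>i. Suc i < length (a # ys) \<longrightarrow> (a # ys) ! (Suc i) \<noteq> (a # ys) ! i + 1"
      using lhs by blast
  qed
qed

lemma no_consecutive_nc: "no_consecutive M \<longleftrightarrow> nc M"
proof -
  let ?p = "sorted_list_of_multiset M"
  have "sorted ?p" by simp
  then have "(\<forall>i. Suc i < length ?p \<longrightarrow> ?p ! (Suc i) \<noteq> ?p ! i + 1) \<longleftrightarrow> (\<forall>x\<in>set ?p. Suc x \<notin> set ?p)"
    by (rule sorted_nc_list)
  then show ?thesis unfolding no_consecutive_def nc_def Let_def by auto
qed

lemma nc_set: "set_mset M = set_mset N \<Longrightarrow> nc M = nc N"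
  unfolding nc_def by simp

definition CS :: "nat \<Rightarrow> nat \<Rightarrow> nat \<Rightarrow> nat multiset set" where
  "CS n m k = {M. size M = n \<and> set_mset M \<subseteq> {1..m} \<and> nc M \<and> card (set_mset M) = k}"

definition ES :: "nat \<Rightarrow> nat \<Rightarrow> nat \<Rightarrow> nat multiset set" where
  "ES n m k = {M \<in> CS n m k. m \<in># M}"

lemma CS_finite: "finite (CS n m k)"
proof -
  have "CS n m k \<subseteq> multisets_of_size {1..m} n"
    by (auto simp: CS_def multisets_of_size_def)
  moreover have "finite (multisets_of_size {1..m} n)" by (rule finite_multisets_of_size) simp
  ultimately show ?thesis by (rule finite_subset)
qed

lemma ES_finite: "finite (ES n m k)"
  using CS_finite[of n m k] unfolding ES_def by simp

lemma R1: "card (CS n (Suc m) k) = card (CS n m k) + card (ES n (Suc m) k)"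
proof -
  have "CS n (Suc m) k = CS n m k \<union> ES n (Suc m) k"
  proof (intro equalityI subsetI)
    fix M assume M: "M \<in> CS n (Suc m) k"
    show "M \<in> CS n m k \<union> ES n (Suc m) k"
    proof (cases "Suc m \<in># M")
      case True then show ?thesis using M by (simp add: ES_def)
    next
      case False
      have "set_mset M \<subseteq> {1..m}"
      proof
        fix x assume "x \<in># M"
        then have "x \<in> {1..Suc m}" "x \<noteq> Suc m" using M False by (auto simp: CS_def)
        then show "x \<in> {1..m}" by auto
      qed
      then show ?thesis using M by (simp add: CS_def)
    qed
  next
    fix M assume "M \<in> CS n m k \<union> ES n (Suc m) k"
    then show "M \<in> CS n (Suc m) k" by (auto simp: CS_def ES_def)
  qed
  moreover have "CS n m k \<inter> ES n (Suc m) k = {}" by (auto simp: CS_def ES_def)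
  ultimately show ?thesis by (simp add: card_Un_disjoint CS_finite ES_finite)
qed

lemma R2: "card (ES (Suc n) (m+2) (Suc k)) = card (ES n (m+2) (Suc k)) + card (CS n m k)"
proof -
  have eq: "ES (Suc n) (m+2) (Suc k) = add_mset (m+2) ` (ES n (m+2) (Suc k) \<union> CS n m k)"
  proof (intro equalityI subsetI)
    fix M assume M: "M \<in> ES (Suc n) (m+2) (Suc k)"
    define M' where "M' = M - {#m+2#}"
    have Mi: "m+2 \<in># M" using M by (simp add: ES_def)
    have MM: "M = add_mset (m+2) M'" unfolding M'_def using Mi by simp
    have sz: "size M' = n" using M MM by (auto simp: ES_def CS_def)
    have ncM: "nc M" using M by (simp add: ES_def CS_def)
    have ncM': "nc M'" using ncM unfolding nc_def MM by auto
    have setM: "set_mset M \<subseteq> {1..m+2}" using M by (simp add: ES_def CS_def)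
    have cM: "card (set_mset M) = Suc k" using M by (simp add: ES_def CS_def)
    show "M \<in> add_mset (m+2) ` (ES n (m+2) (Suc k) \<union> CS n m k)"
    proof (cases "m+2 \<in># M'")
      case True
      have "set_mset M = set_mset M'" using MM True by auto
      then have "M' \<in> ES n (m+2) (Suc k)"
        using True sz ncM' setM cM by (simp add: ES_def CS_def)
      then show ?thesis using MM by blast
    next
      case False
      have "Suc (m+1) \<in># M" using Mi by simp
      then have n1: "m+1 \<notin># M" using ncM unfolding nc_def by blast
      have s': "set_mset M' \<subseteq> {1..m}"
      proof
        fix x assume x: "x \<in># M'"
        then have "x \<in># M" using MM by simp
        then have "x \<in> {1..m+2}" "x \<noteq> m+1" using setM n1 by auto
        moreover have "x \<noteq> m+2" using x False by auto
        ultimately show "x \<in> {1..m}" by auto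
      qed
      have "set_mset M = insert (m+2) (set_mset M')" using MM by simp
      then have "card (set_mset M) = Suc (card (set_mset M'))" using False by simp
      then have "card (set_mset M') = k" using cM by simp
      then have "M' \<in> CS n m k" using sz ncM' s' by (simp add: CS_def)
      then show ?thesis using MM by blast
    qed
  next
    fix M assume "M \<in> add_mset (m+2) ` (ES n (m+2) (Suc k) \<union> CS n m k)"
    then obtain M' where MM: "M = add_mset (m+2) M'" and M': "M' \<in> ES n (m+2) (Suc k) \<union> CS n m k" by blast
    show "M \<in> ES (Suc n) (m+2) (Suc k)"
    proof (cases "M' \<in> ES n (m+2) (Suc k)")
      case True
      then have i: "m+2 \<in># M'" by (simp add: ES_def)
      then have sM: "set_mset M = set_mset M'" using MM by auto
      then have "nc M" using True nc_set[OF sM] by (simp add: ES_def CS_def)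
      then show ?thesis using True MM sM unfolding ES_def CS_def by auto
    next
      case False
      then have C: "M' \<in> CS n m k" using M' by blast
      then have s': "set_mset M' \<subseteq> {1..m}" and nc': "nc M'" and c': "card (set_mset M') = k" and sz: "size M' = n"
        by (auto simp: CS_def)
      have nm2: "m+2 \<notin># M'" using s' by auto
      have nm1: "m+1 \<notin># M'" using s' by auto
      have nm3: "m+3 \<notin># M'" using s' by auto
      have "nc M"
        unfolding nc_def MM
      proof (intro allI impI)
        fix x assume x: "x \<in># add_mset (m+2) M'"
        show "Suc x \<notin># add_mset (m+2) M'"
        proof (cases "x = m+2")
          case True then show ?thesis using nm3 by (simp add: eval_nat_numeral)
        next
          case False
          then have xm: "x \<in># M'" using x by simp
          then have "Suc x \<notin># M'" using nc' unfolding nc_def by blast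
          moreover have "Suc x \<noteq> m+2" using xm nm1 by auto
          ultimately show ?thesis by simp
        qed
      qed
      moreover have "card (set_mset M) = Suc k" using MM nm2 c' by simp
      moreover have "set_mset M \<subseteq> {1..m+2}" using MM s' by auto
      ultimately show ?thesis using MM sz unfolding ES_def CS_def by simp
    qed
  qed
  have "card (ES (Suc n) (m+2) (Suc k)) = card (ES n (m+2) (Suc k) \<union> CS n m k)"
    unfolding eq by (rule card_image) (simp add: inj_on_def)
  also have "\<dots> = card (ES n (m+2) (Suc k)) + card (CS n m k)"
  proof (rule card_Un_disjoint)
    show "ES n (m + 2) (Suc k) \<inter> CS n m k = {}" by (auto simp: ES_def CS_def)
  qed (simp_all add: CS_finite ES_finite)
  finally show ?thesis .
qed


lemma set_sub_single: "set_mset M \<subseteq> {x} \<Longrightarrow> M = replicate_mset (size M) x"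
  by (induction M) auto

lemma card_set_le_size: "card (set_mset M) \<le> size M"
proof (induction M)
  case empty then show ?case by simp
next
  case (add x M)
  have "card (set_mset (add_mset x M)) \<le> Suc (card (set_mset M))"
    by (simp add: card_insert_le_m1 card_insert_if)
  then show ?case using add by simp
qed

lemma CS_n_0: "n \<ge> 1 \<Longrightarrow> CS n 0 k = {}"
  by (auto simp: CS_def)

lemma ES_0: "m \<ge> 1 \<Longrightarrow> ES 0 m k = {}"
  by (auto simp: ES_def CS_def)

lemma ES_k0: "ES n m 0 = {}"
  by (auto simp: ES_def CS_def)

lemma CS_0: "card (CS 0 m k) = (if k = 0 then 1 else 0)"
proof -
  have "CS 0 m k = (if k = 0 then {{#}} else {})"
    by (auto simp: CS_def nc_def)
  then show ?thesis by simp
qed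

lemma ES_1: "n \<ge> 1 \<Longrightarrow> card (ES n 1 k) = (if k = 1 then 1 else 0)"
proof -
  assume n: "n \<ge> 1"
  have "ES n 1 k = (if k = 1 then {replicate_mset n 1} else {})"
  proof (intro equalityI subsetI)
    fix M assume M: "M \<in> ES n 1 k"
    then have s: "set_mset M \<subseteq> {1}" and sz: "size M = n" and c: "card (set_mset M) = k" and i: "1 \<in># M"
      by (auto simp: ES_def CS_def)
    have "set_mset M = {1}" using s i by auto
    then have "k = 1" using c by simp
    moreover have "M = replicate_mset n 1" using set_sub_single[OF s] sz by simp
    ultimately show "M \<in> (if k = 1 then {replicate_mset n 1} else {})" by simp
  next
    fix M :: "nat multiset" assume "M \<in> (if k = 1 then {replicate_mset n 1} else {})"
    then have k: "k = 1" and M: "M = replicate_mset n 1" by (auto split: if_splits)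
    show "M \<in> ES n 1 k" using n unfolding k M ES_def CS_def nc_def by auto
  qed
  then show ?thesis by simp
qed

definition cf :: "nat \<Rightarrow> nat \<Rightarrow> nat \<Rightarrow> nat" where
  "cf n m k = (if k = 0 then 0 else ((m+1-k) choose k) * ((n-1) choose (k-1)))"

definition ef :: "nat \<Rightarrow> nat \<Rightarrow> nat \<Rightarrow> nat" where
  "ef n m k = (if k = 0 then 0 else ((m-k) choose (k-1)) * ((n-1) choose (k-1)))"

lemma pascal_m: "k \<ge> 1 \<Longrightarrow> (m+2-k) choose k = ((m+1-k) choose k) + ((m+1-k) choose (k-1))"
proof (cases "k \<le> m + 1")
  case True
  assume k: "k \<ge> 1"
  obtain j where kj: "k = Suc j" using k by (cases k) auto
  have "m+2-k = Suc (m+1-k)" using True by simp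
  then show ?thesis using kj by (simp add: add.commute)
next
  case False
  assume k: "k \<ge> 1"
  then show ?thesis using False by simp
qed

lemma cf_step: "cf n (Suc m) k = cf n m k + ef n (Suc m) k"
  unfolding cf_def ef_def
  using pascal_m[of k m] by (simp add: algebra_simps)

lemma ef_step: "n \<ge> 1 \<Longrightarrow> ef (Suc n) (m+2) (Suc k) = ef n (m+2) (Suc k) + cf n m k"
proof -
  assume n: "n \<ge> 1"
  show ?thesis
  proof (cases k)
    case 0 then show ?thesis by (simp add: ef_def cf_def)
  next
    case (Suc j)
    obtain p where np: "n = Suc p" using n by (cases n) auto
    have "n choose k = ((n-1) choose k) + ((n-1) choose (k-1))"
      using Suc np by (simp add: add.commute)
    then show ?thesis using Suc by (simp add: ef_def cf_def algebra_simps)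
  qed
qed

lemma cs_closed: "\<forall>n\<ge>1. \<forall>k. card (CS n m k) = cf n m k \<and> (m \<ge> 1 \<longrightarrow> card (ES n m k) = ef n m k)"
proof (induction m rule: less_induct)
  case (less m)
  consider "m = 0" | "m = 1" | p where "m = p + 2"
    by (rule nat3_cases)
  then show ?case
  proof cases
    case 1
    then show ?thesis by (auto simp: CS_n_0 cf_def)
  next
    case 2
    show ?thesis
    proof (intro allI impI)
      fix n k :: nat assume n: "n \<ge> 1"
      have e: "card (ES n 1 k) = ef n 1 k"
        using ES_1[OF n, of k] by (cases k) (auto simp: ef_def)
      have "card (CS n 1 k) = card (CS n 0 k) + card (ES n 1 k)" using R1[of n 0 k] by simp
      also have "\<dots> = cf n 0 k + ef n 1 k" using e n by (simp add: CS_n_0 cf_def)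
      also have "\<dots> = cf n 1 k" using cf_step[of n 0 k] by simp
      finally show "card (CS n m k) = cf n m k \<and> (m \<ge> 1 \<longrightarrow> card (ES n m k) = ef n m k)"
        using 2 e by simp
    qed
  next
    case 3
    have IHp: "\<And>n k. n \<ge> 1 \<Longrightarrow> card (CS n p k) = cf n p k" using less 3 by simp
    have IHp1: "\<And>n k. n \<ge> 1 \<Longrightarrow> card (CS n (p+1) k) = cf n (p+1) k" using less 3 by simp
    have E: "card (ES n (p+2) k) = ef n (p+2) k" if n: "n \<ge> 1" for n k
      using n
    proof (induction n arbitrary: k rule: dec_induct)
      case base
      show ?case
      proof (cases k)
        case 0 then show ?thesis by (simp add: ES_k0 ef_def)
      next
        case (Suc j)
        have "card (ES 1 (p+2) (Suc j)) = card (ES 0 (p+2) (Suc j)) + card (CS 0 p j)"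
          using R2[of 0 p j] by simp
        also have "\<dots> = (if j = 0 then 1 else 0)" by (simp add: ES_0 CS_0)
        also have "\<dots> = ef 1 (p+2) (Suc j)" by (simp add: ef_def)
        finally show ?thesis using Suc by simp
      qed
    next
      case (step n)
      show ?case
      proof (cases k)
        case 0 then show ?thesis by (simp add: ES_k0 ef_def)
      next
        case (Suc j)
        have "card (ES (Suc n) (p+2) (Suc j)) = card (ES n (p+2) (Suc j)) + card (CS n p j)"
          using R2[of n p j] by simp
        also have "\<dots> = ef n (p+2) (Suc j) + cf n p j" using step IHp[of n j] by simp
        also have "\<dots> = ef (Suc n) (p+2) (Suc j)" using ef_step[of n p j] step by simp
        finally show ?thesis using Suc by simp
      qed
    qed
    show ?thesis
    proof (intro allI impI)
      fix n k :: nat assume n: "n \<ge> 1"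
      have "card (CS n (p+2) k) = card (CS n (p+1) k) + card (ES n (p+2) k)" using R1[of n "p+1" k] by simp
      also have "\<dots> = cf n (p+1) k + ef n (p+2) k" using IHp1[OF n] E[OF n] by simp
      also have "\<dots> = cf n (p+2) k" using cf_step[of n "p+1" k] by simp
      finally show "card (CS n m k) = cf n m k \<and> (m \<ge> 1 \<longrightarrow> card (ES n m k) = ef n m k)"
        using 3 E[OF n] by simp
    qed
  qed
qed

lemma a_seq_sum: "a_seq n = (\<Sum>k<n+1. card (CS n n k))"
proof -
  let ?S = "{M :: nat multiset. size M = n \<and> set_mset M \<subseteq> {1..n} \<and> no_consecutive M}"
  have fin: "finite ?S"
  proof -
    have "?S \<subseteq> multisets_of_size {1..n} n" by (auto simp: multisets_of_size_def)
    moreover have "finite (multisets_of_size {1..n} n)" by (rule finite_multisets_of_size) simp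
    ultimately show ?thesis by (rule finite_subset)
  qed
  have img: "(\<lambda>M. card (set_mset M)) ` ?S \<subseteq> {..<n+1}"
    using card_set_le_size by (auto simp: less_Suc_eq_le intro: le_trans)
  have "(\<Sum>k\<in>{..<n+1}. \<Sum>M\<in>{x \<in> ?S. card (set_mset x) = k}. (1::nat)) = (\<Sum>M\<in>?S. 1)"
    by (rule sum.group[OF fin _ img]) simp
  moreover have "{x \<in> ?S. card (set_mset x) = k} = CS n n k" for k
    by (auto simp: CS_def no_consecutive_nc)
  ultimately show ?thesis unfolding a_seq_def by simp
qed

lemma a_seq_closed: "n \<ge> 1 \<Longrightarrow> a_seq n = (\<Sum>k<n+1. cf n n k)"
  unfolding a_seq_sum using cs_closed[of n] by simp




definition FF :: "nat \<Rightarrow> nat \<Rightarrow> real" where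
  "FF n k = (if k = 0 then 0 else real ((n + 1 - k) choose k) * real ((n - 1) choose (k - 1)))"

definition GG :: "nat \<Rightarrow> nat \<Rightarrow> real" where
  "GG n k = (if k < 2 then 0 else -2 * (2 * real n - 2 * real k + 3) * real ((n - k) choose (k - 2)) * real ((n - 1) choose (k - 1)))"

lemma bf: "k \<le> n \<Longrightarrow> real (n choose k) = fact n / (fact k * fact (n - k))"
  by (simp add: binomial_fact)

lemma alg_generic:
  fixes A B C D :: real and j m :: nat
  assumes "A > 0" "B > 0" "C > 0" "D > 0" 
  shows "(2*real j + real m + 5) * (((real j+real m+4)*(real j+real m+3)*(real j+real m+2)*A / ((real j+2)*(real j+1)*B*((real m+2)*(real m+1)*C))) * ((2*real j+real m+4)*(2*real j+real m+3)*D / ((real j+1)*B*((real j+real m+3)*(real j+real m+2)*A))))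
     - 2 * (2*real j + real m + 5) * (((real j+real m+3)*(real j+real m+2)*A / ((real j+2)*(real j+1)*B*((real m+1)*C))) * ((2*real j+real m+3)*D / ((real j+1)*B*((real j+real m+2)*A))))
     - 3 * (2*real j + real m + 3) * (((real j+real m+2)*A / ((real j+2)*(real j+1)*B*C)) * (D / ((real j+1)*B*A)))
     = (-2 * (2*real j + 2*real m + 5) * (A / ((real j+1)*B*C)) * ((2*real j+real m+3)*D / ((real j+2)*(real j+1)*B*A)))
     - (-2 * (2*real j + 2*real m + 7) * ((real j+real m+2)*A / (B*((real m+2)*(real m+1)*C))) * ((2*real j+real m+3)*D / ((real j+1)*B*((real j+real m+2)*A))))"
  using assms apply (simp add: divide_simps) apply (simp add: algebra_simps) done

lemma generic:
  fixes j m :: nat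
  shows "(2*real j + real m + 5) * (real ((j+m+4) choose (j+2)) * real ((2*j+m+4) choose (j+1)))
     - 2 * (2*real j + real m + 5) * (real ((j+m+3) choose (j+2)) * real ((2*j+m+3) choose (j+1)))
     - 3 * (2*real j + real m + 3) * (real ((j+m+2) choose (j+2)) * real ((2*j+m+2) choose (j+1)))
     = (-2 * (2*real j + 2*real m + 5) * real ((j+m+1) choose (j+1)) * real ((2*j+m+3) choose (j+2)))
     - (-2 * (2*real j + 2*real m + 7) * real ((j+m+2) choose j) * real ((2*j+m+3) choose (j+1)))"
proof -
  let ?A = "fact (j+m+1) :: real"
  let ?B = "fact j :: real"
  let ?C = "fact m :: real"
  let ?D = "fact (2*j+m+2) :: real"
  have e1: "real ((j+m+4) choose (j+2)) = (real j+real m+4)*(real j+real m+3)*(real j+real m+2)*?A / ((real j+2)*(real j+1)*?B*((real m+2)*(real m+1)*?C))"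
    by (subst bf) (simp_all add: fact_Suc eval_nat_numeral algebra_simps)
  have e2: "real ((2*j+m+4) choose (j+1)) = (2*real j+real m+4)*(2*real j+real m+3)*?D / ((real j+1)*?B*((real j+real m+3)*(real j+real m+2)*?A))"
    by (subst bf) (simp_all add: fact_Suc eval_nat_numeral algebra_simps)
  have e3: "real ((j+m+3) choose (j+2)) = (real j+real m+3)*(real j+real m+2)*?A / ((real j+2)*(real j+1)*?B*((real m+1)*?C))"
    by (subst bf) (simp_all add: fact_Suc eval_nat_numeral algebra_simps)
  have e4: "real ((2*j+m+3) choose (j+1)) = (2*real j+real m+3)*?D / ((real j+1)*?B*((real j+real m+2)*?A))"
    by (subst bf) (simp_all add: fact_Suc eval_nat_numeral algebra_simps)
  have e5: "real ((j+m+2) choose (j+2)) = (real j+real m+2)*?A / ((real j+2)*(real j+1)*?B*?C)"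
    by (subst bf) (simp_all add: fact_Suc eval_nat_numeral algebra_simps)
  have e6: "real ((2*j+m+2) choose (j+1)) = ?D / ((real j+1)*?B*?A)"
    by (subst bf) (simp_all add: fact_Suc eval_nat_numeral algebra_simps)
  have e7: "real ((j+m+1) choose (j+1)) = ?A / ((real j+1)*?B*?C)"
    by (subst bf) (simp_all add: fact_Suc eval_nat_numeral algebra_simps)
  have e8: "real ((2*j+m+3) choose (j+2)) = (2*real j+real m+3)*?D / ((real j+2)*(real j+1)*?B*?A)"
    by (subst bf) (simp_all add: fact_Suc eval_nat_numeral algebra_simps)
  have e9: "real ((j+m+2) choose j) = (real j+real m+2)*?A / (?B*((real m+2)*(real m+1)*?C))"
    by (subst bf) (simp_all add: fact_Suc eval_nat_numeral algebra_simps)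
  show ?thesis
    unfolding e1 e2 e3 e4 e5 e6 e7 e8 e9
    by (rule alg_generic) simp_all
qed

lemma FF_eq: "k \<ge> 1 \<Longrightarrow> a = n+1-k \<Longrightarrow> b = n-1 \<Longrightarrow> c = k-1 \<Longrightarrow> k' = k \<Longrightarrow> FF n k = real (a choose k') * real (b choose c)"
  by (simp add: FF_def)

lemma GG_eq: "k \<ge> 2 \<Longrightarrow> a = n-k \<Longrightarrow> b = k-2 \<Longrightarrow> c = n-1 \<Longrightarrow> d = k-1 \<Longrightarrow> r = 2*real n - 2*real k + 3 \<Longrightarrow> GG n k = -2 * r * real (a choose b) * real (c choose d)"
  by (simp add: GG_def)

declare binomial_Suc_Suc[simp del]

lemma key:
  assumes n: "n \<ge> 1"
  shows "(real n + 1) * FF (n+1) k - 2 * (real n + 1) * FF n k - 3 * (real n - 1) * FF (n-1) k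
         = GG n (k+1) - GG n k"
proof -
  consider "k = 0" | "k = 1" | j where "k = j + 2"
  proof -
    assume a: "k=0 \<Longrightarrow> thesis" "k=1 \<Longrightarrow> thesis" "\<And>j. k=j+2 \<Longrightarrow> thesis"
    show thesis
    proof (cases "k \<ge> 2")
      case True then show ?thesis using a(3)[of "k-2"] by simp
    next
      case False then show ?thesis using a(1,2) by (cases k) auto
    qed
  qed
  then show ?thesis
  proof cases
    case 1
    then show ?thesis by (simp add: FF_def GG_def)
  next
    case 2
    have a: "real (n - 1) = real n - 1" using n by simp
    have b: "real ((n - 1) choose 1) = real n - 1" using n by simp
    show ?thesis using 2 n a b
      by (simp add: FF_def GG_def) (simp add: algebra_simps)
  next
    case 3
    note kj = 3
    consider "n < 2*j+2" | "n = 2*j+2" | "n = 2*j+3" | m where "n = 2*j+4+m"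
    proof -
      assume a: "n < 2*j+2 \<Longrightarrow> thesis" "n = 2*j+2 \<Longrightarrow> thesis" "n = 2*j+3 \<Longrightarrow> thesis" "\<And>m. n = 2*j+4+m \<Longrightarrow> thesis"
      show thesis
      proof (cases "n \<ge> 2*j+4")
        case True then show ?thesis using a(4)[of "n-(2*j+4)"] by simp
      next
        case False then show ?thesis using a(1,2,3) by linarith
      qed
    qed
    then show ?thesis
    proof cases
      case 1
      have z1: "FF (n+1) k = 0" using 1 kj by (simp add: FF_def; arith)
      have z2: "FF n k = 0" using 1 kj by (simp add: FF_def; arith)
      have z3: "FF (n-1) k = 0" using 1 kj by (simp add: FF_def; arith)
      have z4: "GG n (k+1) = 0" using 1 kj by (simp add: GG_def; arith)
      have z5: "GG n k = 0"
      proof (cases "n < j + 2")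
        case True then show ?thesis using kj n by (simp add: GG_def; arith)
      next
        case False then show ?thesis using 1 kj by (simp add: GG_def; arith)
      qed
      show ?thesis unfolding z1 z2 z3 z4 z5 by simp
    next
      case 2
      have z3: "FF (n-1) k = 0" using 2 kj by (simp add: FF_def; arith)
      have z2: "FF n k = 0" using 2 kj by (simp add: FF_def; arith)
      have z4: "GG n (k+1) = 0" using 2 kj by (simp add: GG_def; arith)
      have f1': "FF (n+1) k = real ((j+2) choose k) * real ((2*j+2) choose (j+1))" by (rule FF_eq) (use 2 kj in simp)+
      have f1: "FF (n+1) k = real ((2*j+2) choose (j+1))" using f1' kj by simp
      have g1': "GG n k = -2 * (2 * real j + 3) * real (j choose j) * real ((2*j+1) choose (j+1))" by (rule GG_eq) (use 2 kj in simp)+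
      have g1: "GG n k = -2 * (2 * real j + 3) * real ((2*j+1) choose (j+1))" using g1' by simp
      have c: "real ((2*j+2) choose (j+1)) = 2 * real ((2*j+1) choose (j+1))"
      proof -
        have "(2*j+2) choose (j+1) = ((2*j+1) choose j) + ((2*j+1) choose (j+1))"
          by (simp add: binomial_Suc_Suc[symmetric] eval_nat_numeral)
        moreover have "(2*j+1) choose j = (2*j+1) choose (j+1)"
          using binomial_symmetric[of j "2*j+1"] by simp
        ultimately show ?thesis by simp
      qed
      show ?thesis unfolding z2 z3 z4 f1 g1 c using 2 by (simp add: algebra_simps)
    next
      case 3
      have z3: "FF (n-1) k = 0" using 3 kj by (simp add: FF_def; arith)
      have z4: "GG n (k+1) = 0" using 3 kj by (simp add: GG_def; arith)
      have f1: "FF (n+1) k = real ((j+3) choose (j+2)) * real ((2*j+3) choose (j+1))" by (rule FF_eq) (use 3 kj in simp)+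
      have f2': "FF n k = real ((j+2) choose k) * real ((2*j+2) choose (j+1))" by (rule FF_eq) (use 3 kj in simp)+
      have f2: "FF n k = real ((2*j+2) choose (j+1))" using f2' kj by simp
      have g1: "GG n k = -2 * (2 * real j + 5) * real ((j+1) choose j) * real ((2*j+2) choose (j+1))" by (rule GG_eq) (use 3 kj in simp)+
      have c1: "real ((j+3) choose (j+2)) = real j + 3"
        using binomial_symmetric[of "j+2" "j+3"] by simp
      have c2: "real ((j+1) choose j) = real j + 1"
        using binomial_symmetric[of "j" "j+1"] by simp
      have c3: "(real j + 2) * real ((2*j+3) choose (j+1)) = (2 * real j + 3) * real ((2*j+2) choose (j+1))"
      proof -
        have "(j+2) * ((2*j+3) choose (j+2)) = (2*j+3) * ((2*j+2) choose (j+1))"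
          using binomial_absorption[of "j+1" "2*j+3"] by simp
        moreover have "(2*j+3) choose (j+2) = (2*j+3) choose (j+1)"
          using binomial_symmetric[of "j+1" "2*j+3"] by simp
        ultimately have "(j+2) * ((2*j+3) choose (j+1)) = (2*j+3) * ((2*j+2) choose (j+1))" by simp
        then have "real ((j+2) * ((2*j+3) choose (j+1))) = real ((2*j+3) * ((2*j+2) choose (j+1)))" by simp
        then show ?thesis by (simp add: algebra_simps)
      qed
      have "(real n + 1) * FF (n+1) k = 2 * (real j + 3) * ((real j + 2) * real ((2*j+3) choose (j+1)))"
        using 3 unfolding f1 c1 by (simp add: algebra_simps)
      also have "\<dots> = 2 * (real j + 3) * ((2 * real j + 3) * real ((2*j+2) choose (j+1)))"
        unfolding c3 ..
      finally show ?thesis unfolding z3 z4 f2 g1 c2 using 3 by (simp add: algebra_simps)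
    next
      case 4
      have f1: "FF (n+1) k = real ((j+m+4) choose (j+2)) * real ((2*j+m+4) choose (j+1))"
        by (rule FF_eq) (use 4 kj in simp)+
      have f2: "FF n k = real ((j+m+3) choose (j+2)) * real ((2*j+m+3) choose (j+1))"
        by (rule FF_eq) (use 4 kj in simp)+
      have f3: "FF (n-1) k = real ((j+m+2) choose (j+2)) * real ((2*j+m+2) choose (j+1))"
        by (rule FF_eq) (use 4 kj in simp)+
      have g1: "GG n (k+1) = -2 * (2*real j + 2*real m + 5) * real ((j+m+1) choose (j+1)) * real ((2*j+m+3) choose (j+2))"
        by (rule GG_eq) (use 4 kj in simp)+
      have g2: "GG n k = -2 * (2*real j + 2*real m + 7) * real ((j+m+2) choose j) * real ((2*j+m+3) choose (j+1))"
        by (rule GG_eq) (use 4 kj in simp)+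
      have r1: "real n + 1 = 2*real j + real m + 5" "real n - 1 = 2*real j + real m + 3" using 4 by simp_all
      show ?thesis unfolding f1 f2 f3 g1 g2 r1 by (rule generic)
    qed
  qed
qed

lemma sum_trunc: fixes M a :: nat shows "(\<And>k. k \<ge> a \<Longrightarrow> f k = 0) \<Longrightarrow> a \<le> M \<Longrightarrow> sum f {..<M} = sum f {..<a}"
proof (induction M)
  case 0 then show ?case by simp
next
  case (Suc M)
  show ?case
  proof (cases "a = Suc M")
    case True then show ?thesis by simp
  next
    case False then show ?thesis using Suc by simp
  qed
qed

lemma FF_zero: "k \<ge> n + 2 \<Longrightarrow> FF n k = 0"
  by (simp add: FF_def)

lemma GG_zero: "n \<ge> 1 \<Longrightarrow> k \<ge> n + 1 \<Longrightarrow> GG n k = 0"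
  by (simp add: GG_def; arith)

definition SS :: "nat \<Rightarrow> real" where
  "SS n = (\<Sum>k<n+2. FF n k)"

lemma SS_ext: "M \<ge> n + 2 \<Longrightarrow> (\<Sum>k<M. FF n k) = SS n"
  unfolding SS_def by (rule sum_trunc) (auto intro: FF_zero)

lemma SS_rec:
  assumes n: "n \<ge> 1"
  shows "(real n + 1) * SS (n+1) = 2 * (real n + 1) * SS n + 3 * (real n - 1) * SS (n-1)"
proof -
  have "(\<Sum>k<n+4. (real n + 1) * FF (n+1) k - 2 * (real n + 1) * FF n k - 3 * (real n - 1) * FF (n-1) k)
        = (\<Sum>k<n+4. GG n (Suc k) - GG n k)"
    using key[OF n] by simp
  also have "\<dots> = GG n (n+4) - GG n 0"
    by (rule sum_lessThan_telescope)
  also have "\<dots> = 0" using n by (simp add: GG_zero GG_def)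
  finally have "(real n + 1) * (\<Sum>k<n+4. FF (n+1) k) - 2 * (real n + 1) * (\<Sum>k<n+4. FF n k) - 3 * (real n - 1) * (\<Sum>k<n+4. FF (n-1) k) = 0"
    by (simp add: sum_subtractf sum_distrib_left)
  moreover have "(\<Sum>k<n+4. FF (n+1) k) = SS (n+1)" by (rule SS_ext) simp
  moreover have "(\<Sum>k<n+4. FF n k) = SS n" by (rule SS_ext) simp
  moreover have "(\<Sum>k<n+4. FF (n-1) k) = SS (n-1)" by (rule SS_ext) simp
  ultimately show ?thesis by simp
qed

lemma SS_1: "SS 1 = 1"
  by (simp add: SS_def FF_def numeral_3_eq_3 lessThan_Suc)


declare binomial_Suc_Suc[simp]



locale seqA =
  fixes a :: "nat \<Rightarrow> real"
  assumes a1: "a 1 = 1"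
    and nonneg: "\<And>n. a n \<ge> 0"
    and rec: "\<And>n. n \<ge> 1 \<Longrightarrow> (real n + 1) * a (n+1) = 2*(real n+1)*a n + 3*(real n - 1)*a (n-1)"
begin

definition u :: "nat \<Rightarrow> real" where "u n = (if n = 0 then 1 else 2 * a n)"
definition U :: "real fps" where "U = Abs_fps u"

lemma u0: "u 0 = 1" by (simp add: u_def)
lemma u1: "u 1 = 2" using a1 by (simp add: u_def)

lemma u_rec: "n \<ge> 1 \<Longrightarrow> (real n + 1) * u (n+1) = 2*(real n+1)*u n + 3*(real n - 1)*u (n-1)"
proof -
  assume n: "n \<ge> 1"
  show ?thesis
  proof (cases "n = 1")
    case True
    then show ?thesis using rec[of 1] by (simp add: u_def)
  next
    case False
    then have "n - 1 \<noteq> 0" using n by simp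
    then show ?thesis using rec[OF n] n by (simp add: u_def algebra_simps)
  qed
qed

lemma u_nonneg: "u n \<ge> 0"
  by (simp add: u_def nonneg)

lemma u_bound: "u n \<le> 3 ^ n"
proof (induction n rule: less_induct)
  case (less n)
  consider "n = 0" | "n = 1" | m where "n = m + 2"
    by (rule nat3_cases)
  then show ?case
  proof cases
    case 1 then show ?thesis by (simp add: u0)
  next
    case 2 then show ?thesis using u1 by simp
  next
    case 3
    have r: "(real m + 2) * u (m+2) = 2*(real m+2)*u (m+1) + 3*(real m)*u m"
      using u_rec[of "m+1"] by (simp add: algebra_simps)
    have b1: "u (m+1) \<le> 3^(m+1)" using less[of "m+1"] 3 by simp
    have b0: "u m \<le> 3^m" using less[of m] 3 by simp
    have "(real m + 2) * u (m+2) \<le> 2*(real m+2)*3^(m+1) + 3*(real m)*3^m"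
      unfolding r using b1 b0 u_nonneg[of m]
      by (intro add_mono mult_left_mono) auto
    also have "\<dots> \<le> (real m + 2) * 3^(m+2)"
      by (simp add: algebra_simps)
    finally show ?thesis using 3 by simp
  qed
qed

lemma U_nth: "fps_nth U n = u n" by (simp add: U_def)

lemma ode_e: "(1 - 2 * fps_X - 3 * fps_X^2) * (F::real fps) = F - 2 * (fps_X * F) - 3 * (fps_X^2 * F)"
  by (simp add: ring_distribs)

lemma ode_c: "fps_nth ((1 - 2 * fps_X - 3 * fps_X^2) * (F::real fps)) n = fps_nth F n - (if n = 0 then 0 else 2 * fps_nth F (n-1)) - (if n < 2 then 0 else 3 * fps_nth F (n-2))"
  unfolding ode_e by (simp add: fps_X_power_mult_nth fps_X_mult_nth)

lemma ode: "(1 - 2 * fps_X - 3 * fps_X^2) * fps_deriv U = 2 * U"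
proof (rule fps_ext)
  fix n :: nat
  consider "n = 0" | "n = 1" | m where "n = m + 2"
    by (rule nat3_cases)
  then show "fps_nth ((1 - 2 * fps_X - 3 * fps_X^2) * fps_deriv U) n = fps_nth (2 * U) n"
  proof cases
    case 1 then show ?thesis unfolding ode_c using u0 u1 by (simp add: U_nth)
  next
    case 2
    have u1': "u (Suc 0) = 2" using u1 by simp
    have r': "u (Suc (Suc 0)) = 4" using u_rec[of 1] u1 by simp
    have r: "u 2 = 4" using r' by (simp add: numeral_2_eq_2)
    show ?thesis unfolding ode_c using 2 by (simp add: U_nth r r' u1' u0 fps_numeral_nth)
  next
    case 3
    have r: "(real m + 3) * u (Suc (Suc (Suc m))) = 2*(real m+3)*u (Suc (Suc m)) + 3*(real m + 1)*u (Suc m)"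
      using u_rec[of "m+2"] by (simp add: algebra_simps)
    have "fps_nth ((1 - 2 * fps_X - 3 * fps_X^2) * fps_deriv U) n
          = (real m + 3) * u (Suc (Suc (Suc m))) - 2 * ((real m + 2) * u (Suc (Suc m))) - 3 * ((real m + 1) * u (Suc m))"
      unfolding ode_c using 3 by (simp add: U_nth algebra_simps)
    also have "\<dots> = 2 * u (Suc (Suc m))" using r by (simp add: algebra_simps)
    finally show ?thesis using 3 by (simp add: U_nth numeral_2_eq_2)
  qed
qed

lemma V_ode: "(1 + fps_X) * fps_deriv (U * U * (1 - 3 * fps_X)) = U * U * (1 - 3 * fps_X)"
proof -
  let ?D = "fps_deriv U"
  have d: "fps_deriv (U * U * (1 - 3 * fps_X)) = 2 * U * ?D * (1 - 3 * fps_X) - 3 * (U * U)"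
    by (simp add: fps_deriv_mult algebra_simps)
  have p: "(1 + fps_X) * (1 - 3 * fps_X) = (1 - 2 * fps_X - 3 * fps_X^2 :: real fps)"
    by (simp add: algebra_simps power2_eq_square)
  have "(1 + fps_X) * fps_deriv (U * U * (1 - 3 * fps_X)) = 2 * U * (((1 + fps_X) * (1 - 3 * fps_X)) * ?D) - 3 * (1 + fps_X) * (U * U)"
    unfolding d by (simp add: algebra_simps)
  also have "\<dots> = 2 * U * (2 * U) - 3 * (1 + fps_X) * (U * U)"
    unfolding p ode ..
  also have "\<dots> = U * U * (1 - 3 * fps_X)"
    by (simp add: algebra_simps)
  finally show ?thesis .
qed

lemma V_eq: "U * U * (1 - 3 * fps_X) = 1 + fps_X"
proof -
  define V where "V = U * U * (1 - 3 * fps_X)"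
  have ode2: "(1 + fps_X) * fps_deriv V = V" unfolding V_def by (rule V_ode)
  have v0: "fps_nth V 0 = 1" by (simp add: V_def U_nth u0)
  have vrec: "fps_nth V (Suc n) * (real n + 1) = fps_nth V n * (1 - real n)" for n
  proof (cases n)
    case 0
    have "fps_nth ((1 + fps_X) * fps_deriv V) 0 = fps_nth V 0" using ode2 by simp
    then show ?thesis using 0 by (simp add: algebra_simps)
  next
    case (Suc m)
    have "fps_nth ((1 + fps_X) * fps_deriv V) (Suc m) = fps_nth V (Suc m)" using ode2 by simp
    then have "fps_nth V (Suc (Suc m)) * (real m + 2) + fps_nth V (Suc m) * (real m + 1) = fps_nth V (Suc m)"
      by (simp add: algebra_simps distrib_left)
    then show ?thesis using Suc by (simp add: algebra_simps)
  qed
  have v: "fps_nth V n = (if n \<le> 1 then 1 else 0)" for n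
  proof (induction n)
    case 0 then show ?case using v0 by simp
  next
    case (Suc n)
    have "fps_nth V (Suc n) * (real n + 1) = fps_nth V n * (1 - real n)"
      using vrec[of n] by (simp add: algebra_simps)
    then show ?case using Suc
      by (cases "n = 0"; cases "n = 1") (auto simp: v0)
  qed
  show ?thesis unfolding V_def[symmetric]
    by (rule fps_ext) (simp add: v)
qed


lemma conv: "fps_conv_radius U \<ge> ereal (1/4)"
proof -
  have "summable (\<lambda>n. u n * (1/4::real)^n)"
  proof (rule summable_comparison_test')
    show "summable (\<lambda>n. (3/4::real)^n)" by simp
    fix n :: nat
    have "norm (u n * (1/4::real)^n) = u n * (1/4)^n" using u_nonneg[of n] by simp
    also have "\<dots> \<le> 3^n * (1/4)^n" using u_bound[of n] by (intro mult_right_mono) auto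
    also have "\<dots> = (3/4)^n" by (simp add: power_divide)
    finally show "norm (u n * (1/4::real)^n) \<le> (3/4)^n" .
  qed
  then have "conv_radius u \<ge> norm (1/4::real)" by (rule conv_radius_geI)
  moreover have "fps_nth U = u" by (rule ext) (simp add: U_nth)
  ultimately show ?thesis unfolding fps_conv_radius_def by simp
qed

lemma main:
  assumes z: "\<bar>z\<bar> < 1/8"
  shows "(\<lambda>n. a (Suc n) * z ^ Suc n) sums ((1 - 3*z - sqrt (1 - 2*z - 3*z^2)) / (6*z - 2))"
proof -
  define w where "w = eval_fps U z"
  have zr: "ereal (norm z) < fps_conv_radius U"
  proof -
    have "ereal (norm z) < ereal (1/4)" using z by simp
    then show ?thesis using conv by (rule order_less_le_trans)
  qed
  have s1: "(\<lambda>n. u n * z^n) sums w"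
    using sums_eval_fps[OF zr] unfolding w_def U_nth .
  have zr2: "ereal (norm z) < fps_conv_radius (U * U)"
    using zr fps_conv_radius_mult[of U U] by (simp add: order_less_le_trans)
  have r3: "fps_conv_radius (3 * fps_X :: real fps) = \<infinity>"
  proof -
    have "fps_conv_radius (3 * fps_X :: real fps) \<ge> \<infinity>"
      using fps_conv_radius_mult[of "3::real fps" fps_X] by simp
    then show ?thesis by (simp add: top_unique[unfolded top_ereal_def])
  qed
  have rX: "fps_conv_radius (1 - 3 * fps_X :: real fps) = \<infinity>"
  proof -
    have "fps_conv_radius (1 - 3 * fps_X :: real fps) \<ge> \<infinity>"
      using fps_conv_radius_diff[of "1::real fps" "3 * fps_X"] r3 by simp
    then show ?thesis by (simp add: top_unique[unfolded top_ereal_def])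
  qed
  have e3: "eval_fps (1 - 3 * fps_X) z = 1 - 3 * z"
  proof -
    have "eval_fps (3 * fps_X) z = 3 * z"
      by (subst eval_fps_mult) auto
    then show ?thesis
      by (subst eval_fps_diff) (auto simp: r3)
  qed
  have "eval_fps (U * U * (1 - 3 * fps_X)) z = w * w * (1 - 3 * z)"
    using zr zr2 rX e3 by (simp add: eval_fps_mult w_def)
  moreover have "eval_fps (1 + fps_X :: real fps) z = 1 + z"
    by (subst eval_fps_add) auto
  ultimately have weq: "w * w * (1 - 3 * z) = 1 + z" using V_eq by simp
  have sabs: "summable (\<lambda>n. norm (u n * z^n))"
    using norm_summable_fps[OF zr] by (simp add: U_nth)
  have absle: "(\<Sum>n. norm (u n * z^n)) \<le> (\<Sum>n. (3 * \<bar>z\<bar>)^n)"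
  proof (rule suminf_le)
    fix n
    have "norm (u n * z^n) = u n * \<bar>z\<bar>^n" using u_nonneg[of n] by (simp add: abs_mult power_abs)
    also have "\<dots> \<le> 3^n * \<bar>z\<bar>^n" using u_bound[of n] by (intro mult_right_mono) auto
    also have "\<dots> = (3 * \<bar>z\<bar>)^n" by (simp add: power_mult_distrib)
    finally show "norm (u n * z^n) \<le> (3 * \<bar>z\<bar>)^n" .
  next
    show "summable (\<lambda>n. norm (u n * z^n))" by (rule sabs)
    show "summable (\<lambda>n. (3 * \<bar>z\<bar>)^n)" by (rule summable_geometric) (use z in simp)
  qed
  have geo: "(\<Sum>n. (3 * \<bar>z\<bar>)^n) = 1 / (1 - 3 * \<bar>z\<bar>)"
    by (rule suminf_geometric) (use z in simp)
  have "1 / (1 - 3 * \<bar>z\<bar>) < 2" using z by (simp add: field_simps)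
  then have absl: "(\<Sum>n. norm (u n * z^n)) < 2" using absle geo by simp
  have "(\<lambda>n. u n * z^n + norm (u n * z^n)) sums (w + (\<Sum>n. norm (u n * z^n)))"
    by (intro sums_add s1 summable_sums sabs)
  then have "sum (\<lambda>n. u n * z^n + norm (u n * z^n)) {0} \<le> w + (\<Sum>n. norm (u n * z^n))"
    by (intro sum_le_suminf[of _ "{0}", THEN order_trans]) (auto simp: sums_iff)
  then have "2 \<le> w + (\<Sum>n. norm (u n * z^n))" by (simp add: u0)
  then have wpos: "w > 0" using absl by simp
  have "(\<lambda>n. u (Suc n) * z ^ Suc n) sums (w - u 0 * z^0)"
    using s1 sums_Suc_iff[of "\<lambda>n. u n * z^n" "w - u 0 * z^0"] by simp
  then have "(\<lambda>n. u (Suc n) * z ^ Suc n / 2) sums ((w - 1) / 2)"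
    by (intro sums_divide) (simp add: u0)
  moreover have "(\<lambda>n. u (Suc n) * z ^ Suc n / 2) = (\<lambda>n. a (Suc n) * z ^ Suc n)"
    by (simp add: u_def)
  ultimately have sa: "(\<lambda>n. a (Suc n) * z ^ Suc n) sums ((w - 1) / 2)" by simp
  have pz: "1 - 3 * z > 0" using z by simp
  have sq: "(w * (1 - 3 * z))^2 = 1 - 2*z - 3*z^2"
  proof -
    have "(w * (1 - 3 * z))^2 = (w * w * (1 - 3 * z)) * (1 - 3 * z)" by (simp add: power2_eq_square)
    also have "\<dots> = (1 + z) * (1 - 3 * z)" by (simp only: weq)
    also have "\<dots> = 1 - 2*z - 3*z^2" by (simp add: power2_eq_square algebra_simps)
    finally show ?thesis .
  qed
  have sqe: "sqrt (1 - 2*z - 3*z^2) = w * (1 - 3 * z)"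
    by (rule real_sqrt_unique[OF sq]) (use wpos pz in simp)
  have nz: "6*z - 2 \<noteq> 0" using pz by simp
  have num: "1 - 3*z - w * (1 - 3 * z) = ((w - 1) / 2) * (6*z - 2)"
    by (simp add: field_simps)
  have "(1 - 3*z - sqrt (1 - 2*z - 3*z^2)) / (6*z - 2) = (w - 1) / 2"
    unfolding sqe num by (rule nonzero_mult_div_cancel_right[OF nz])
  then show ?thesis using sa by (simp only:)
qed

end

lemma FF_cf: "FF n k = real (cf n n k)"
  by (simp add: FF_def cf_def)

lemma a_seq_SS: "n \<ge> 1 \<Longrightarrow> real (a_seq n) = SS n"
proof -
  assume n: "n \<ge> 1"
  have "real (a_seq n) = (\<Sum>k<n+1. FF n k)"
    using a_seq_closed[OF n] by (simp add: FF_cf)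
  also have "\<dots> = SS n"
    unfolding SS_def by (simp add: FF_def)
  finally show ?thesis .
qed

lemma a_seq_rec:
  assumes n: "n \<ge> 1"
  shows "(real n + 1) * real (a_seq (n+1)) = 2*(real n+1)*real (a_seq n) + 3*(real n - 1)*real (a_seq (n-1))"
proof (cases "n = 1")
  case True
  have h2: "real (a_seq (Suc (Suc 0))) = SS (Suc (Suc 0))" using a_seq_SS[of "Suc (Suc 0)"] by simp
  then show ?thesis using True SS_rec[of 1] a_seq_SS[of 1] by simp
next
  case False
  then have "n - 1 \<ge> 1" using n by simp
  then show ?thesis using SS_rec[OF n] a_seq_SS[OF n] a_seq_SS[of "n+1"] a_seq_SS[of "n-1"] by simp
qed

lemma a_seq_1: "real (a_seq 1) = 1"
  using a_seq_SS[of 1] SS_1 by simp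

interpretation A: seqA "\<lambda>n. real (a_seq n)"
  by unfold_locales (use a_seq_1 a_seq_rec in auto)

theorem theorem3:
  shows "\<exists>r>0. \<forall>z::real. \<bar>z\<bar> < r \<longrightarrow>
    (\<lambda>n. real (a_seq (Suc n)) * z ^ Suc n) sums
      ((1 - 3*z - sqrt (1 - 2*z - 3*z^2)) / (6*z - 2))"
proof (intro exI[of _ "1/8"] conjI allI impI)
  show "(0::real) < 1/8" by simp
next
  fix z :: real
  assume "\<bar>z\<bar> < 1/8"
  then show "(\<lambda>n. real (a_seq (Suc n)) * z ^ Suc n) sums
      ((1 - 3*z - sqrt (1 - 2*z - 3*z^2)) / (6*z - 2))" by (rule A.main)
qed

end
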